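(* The theory INT is equivalent to the theory FUN of normalized positive additive functionals on $R$: the interpretation sending $P(f)$ to $(0<I(f))$, together with the interpretation sending $(p<I(f))$ to $P(f-p)$ and $(I(f)<q)$ to $P(q-f)$, are mutually inverse interpretations between the two propositional geometric theories. In particular the points of INT correspond exactly to integrals on $R$.
   Context: $R$ is a Riesz space over $\mathbb{Q}$ with strong unit $1$ (for every $x$ there is $n$ with $-n1\le x\le n1$); rationals $r$ are identified with $r\cdot1$. INT is the propositional geometric theory with generators $P(f)$, $f\in R$, and relations: $P(1)=1$; $P(f)\wedge P(-f)=0$; $P(f+g)\le P(f)\vee P(g)$; $P(f)=0$ if $f\le0$; $P(f)=\bigvee_{s>0,\,s\in\mathbb{Q}}P(f-s)$. FUN is the propositional geometric theory with generators $(p<I(f))$ and $(I(f)<q)$ for $f\in R$, $p,q\in\mathbb{Q}$, with relations expressing that each $I(f)$ is a Dedekind real (namely: $(p<I(f))\le(p'<I(f))$ for $p'<p$; $(I(f)<q)\le(I(f)<q')$ for $q<q'$; $(p<I(f))=\bigvee_{p'>p}(p'<I(f))$; $(I(f)<q)=\bigvee_{q'<q}(I(f)<q')$; $1=(p<I(f))\vee(I(f)<q)$ for $p<q$; $0=(q<I(f))\wedge(I(f)<p)$ for $p<q$), and that $I(0)=0$, $I(f+g)=I(f)+I(g)$, $I(f)\ge0$ whenever $f\ge0$, and $I(1)=1$. An integral on $R$ is a positive linear functional $I:R\to\mathbb{R}$ with $I(1)=1$. *)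

theory Defs
  imports Complex_Main
begin

definition frame :: "'l::complete_lattice itself \<Rightarrow> bool" where
  "frame _ \<longleftrightarrow> (\<forall>(x::'l) A. inf x (Sup A) = Sup ((\<lambda>a. inf x a) ` A))"

text \<open>smult is the scalar multiplication by rationals, u the strong unit 1.\<close>
definition riesz_space_Q :: "(rat \<Rightarrow> 'r::{ordered_ab_group_add,lattice} \<Rightarrow> 'r) \<Rightarrow> bool" where
  "riesz_space_Q smult \<longleftrightarrow>
     (\<forall>r f g. smult r (f + g) = smult r f + smult r g) \<and>
     (\<forall>r s f. smult (r + s) f = smult r f + smult s f) \<and>
     (\<forall>r s f. smult r (smult s f) = smult (r * s) f) \<and>
     (\<forall>f. smult 1 f = f) \<and>
     (\<forall>r f. 0 \<le> r \<longrightarrow> 0 \<le> f \<longrightarrow> 0 \<le> smult r f)"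

definition strong_unit :: "(rat \<Rightarrow> 'r::{ordered_ab_group_add,lattice} \<Rightarrow> 'r) \<Rightarrow> 'r \<Rightarrow> bool" where
  "strong_unit smult u \<longleftrightarrow>
     (\<forall>x. \<exists>n::nat. smult (- of_nat n) u \<le> x \<and> x \<le> smult (of_nat n) u)"

definition INT_model ::
  "(rat \<Rightarrow> 'r::{ordered_ab_group_add,lattice} \<Rightarrow> 'r) \<Rightarrow> 'r \<Rightarrow> ('r \<Rightarrow> 'l::complete_lattice) \<Rightarrow> bool" where
  "INT_model smult u P \<longleftrightarrow>
     P u = top \<and>
     (\<forall>f. inf (P f) (P (- f)) = bot) \<and>
     (\<forall>f g. P (f + g) \<le> sup (P f) (P g)) \<and>
     (\<forall>f. f \<le> 0 \<longrightarrow> P f = bot) \<and>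
     (\<forall>f. P f = Sup {P (f - smult s u) | s. s > 0})"

text \<open>lt p f stands for (p < I(f)), gt f q for (I(f) < q).\<close>

definition dedekind_real :: "(rat \<Rightarrow> 'l::complete_lattice) \<Rightarrow> (rat \<Rightarrow> 'l) \<Rightarrow> bool" where
  "dedekind_real L U \<longleftrightarrow>
     (\<forall>p p'. p' < p \<longrightarrow> L p \<le> L p') \<and>
     (\<forall>q q'. q < q' \<longrightarrow> U q \<le> U q') \<and>
     (\<forall>p. L p = Sup {L p' | p'. p' > p}) \<and>
     (\<forall>q. U q = Sup {U q' | q'. q' < q}) \<and>
     (\<forall>p q. p < q \<longrightarrow> sup (L p) (U q) = top) \<and>
     (\<forall>p q. p < q \<longrightarrow> inf (L q) (U p) = bot)"

definition real_eq_const :: "(rat \<Rightarrow> 'l::complete_lattice) \<Rightarrow> (rat \<Rightarrow> 'l) \<Rightarrow> rat \<Rightarrow> bool" where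
  "real_eq_const L U c \<longleftrightarrow>
     (\<forall>p. L p = (if p < c then top else bot)) \<and> (\<forall>q. U q = (if c < q then top else bot))"

definition real_add_rel ::
  "(rat \<Rightarrow> 'l::complete_lattice) \<Rightarrow> (rat \<Rightarrow> 'l) \<Rightarrow> (rat \<Rightarrow> 'l) \<Rightarrow> (rat \<Rightarrow> 'l)
   \<Rightarrow> (rat \<Rightarrow> 'l) \<Rightarrow> (rat \<Rightarrow> 'l) \<Rightarrow> bool" where
  "real_add_rel Lz Uz Lx Ux Ly Uy \<longleftrightarrow>
     (\<forall>p. Lz p = Sup {inf (Lx p1) (Ly p2) | p1 p2. p1 + p2 = p}) \<and>
     (\<forall>q. Uz q = Sup {inf (Ux q1) (Uy q2) | q1 q2. q1 + q2 = q})"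

definition FUN_model ::
  "(rat \<Rightarrow> 'r::{ordered_ab_group_add,lattice} \<Rightarrow> 'r) \<Rightarrow> 'r
   \<Rightarrow> (rat \<Rightarrow> 'r \<Rightarrow> 'l::complete_lattice) \<Rightarrow> ('r \<Rightarrow> rat \<Rightarrow> 'l) \<Rightarrow> bool" where
  "FUN_model smult u lt gt \<longleftrightarrow>
     (\<forall>f. dedekind_real (\<lambda>p. lt p f) (gt f)) \<and>
     real_eq_const (\<lambda>p. lt p 0) (gt 0) 0 \<and>
     (\<forall>f g. real_add_rel (\<lambda>p. lt p (f + g)) (gt (f + g))
                          (\<lambda>p. lt p f) (gt f) (\<lambda>p. lt p g) (gt g)) \<and>
     (\<forall>f q. 0 \<le> f \<longrightarrow> q \<le> 0 \<longrightarrow> gt f q = bot) \<and>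
     real_eq_const (\<lambda>p. lt p u) (gt u) 1"

definition integral_on :: "(rat \<Rightarrow> 'r::{ordered_ab_group_add,lattice} \<Rightarrow> 'r) \<Rightarrow> 'r \<Rightarrow> ('r \<Rightarrow> real) \<Rightarrow> bool" where
  "integral_on smult u I \<longleftrightarrow>
     (\<forall>f g. I (f + g) = I f + I g) \<and>
     (\<forall>r f. I (smult r f) = of_rat r * I f) \<and>
     (\<forall>f. 0 \<le> f \<longrightarrow> 0 \<le> I f) \<and>
     I u = 1"

end

theory Submission
  imports Defs
begin

locale rsp =
  fixes smult :: "rat \<Rightarrow> 'r::{ordered_ab_group_add,lattice} \<Rightarrow> 'r" and u :: 'r
  assumes R: "riesz_space_Q smult" and SU: "strong_unit smult u"
begin

lemma sm_addR: "smult r (f + g) = smult r f + smult r g" using R unfolding riesz_space_Q_def by blast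
lemma sm_addL: "smult (r + s) f = smult r f + smult s f" using R unfolding riesz_space_Q_def by blast
lemma sm_assoc: "smult r (smult s f) = smult (r * s) f" using R unfolding riesz_space_Q_def by blast
lemma sm_one: "smult 1 f = f" using R unfolding riesz_space_Q_def by blast
lemma sm_pos: "0 \<le> r \<Longrightarrow> 0 \<le> f \<Longrightarrow> 0 \<le> smult r f" using R unfolding riesz_space_Q_def by blast

lemma sm_zeroL[simp]: "smult 0 f = 0"
  using sm_addL[of 0 0 f] by simp
lemma sm_negL: "smult (- r) f = - smult r f"
proof -
  have "smult r f + smult (-r) f = 0" using sm_addL[of r "-r" f] by simp
  from minus_unique[OF this] show ?thesis by simp
qed
lemma sm_diffL: "smult (r - s) f = smult r f - smult s f"
  using sm_addL[of r "-s" f] sm_negL[of s f] by simp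
lemma sm_zeroR[simp]: "smult r 0 = 0"
  using sm_addR[of r 0 0] by simp
lemma sm_negR: "smult r (- f) = - smult r f"
proof -
  have "smult r f + smult r (- f) = 0" using sm_addR[of r f "-f"] by simp
  from minus_unique[OF this] show ?thesis by simp
qed

lemma u_nonneg: "0 \<le> u"
proof -
  obtain n :: nat where n: "smult (- of_nat n) u \<le> u" "u \<le> smult (of_nat n) u"
    using SU unfolding strong_unit_def by blast
  show ?thesis
  proof (cases "n = 0")
    case True then show ?thesis using n by simp
  next
    case False
    have "0 \<le> smult (of_nat n) u - smult (- of_nat n) u" using n by simp
    also have "\<dots> = smult (2 * of_nat n) u" using sm_diffL[of "of_nat n" "- of_nat n" u] by simp
    finally have h: "0 \<le> smult (2 * of_nat n) u" .
    have "0 \<le> smult (1 / (2 * of_nat n)) (smult (2 * of_nat n) u)"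
      by (rule sm_pos[OF _ h]) simp
    also have "\<dots> = u" using False by (simp add: sm_assoc sm_one)
    finally show ?thesis .
  qed
qed

lemma smu_mono: "r \<le> s \<Longrightarrow> smult r u \<le> smult s u"
  using sm_pos[of "s - r" u] u_nonneg sm_diffL[of s r u] by simp

lemma smu_nonneg: "0 \<le> r \<Longrightarrow> 0 \<le> smult r u"
  using smu_mono[of 0 r] by simp
lemma smu_nonpos: "r \<le> 0 \<Longrightarrow> smult r u \<le> 0"
  using smu_mono[of r 0] by simp

lemma bounded: "\<exists>N::rat. N > 0 \<and> smult (- N) u \<le> f \<and> f \<le> smult N u"
proof -
  obtain n :: nat where n: "smult (- of_nat n) u \<le> f" "f \<le> smult (of_nat n) u"
    using SU unfolding strong_unit_def by blast
  have "smult (- (of_nat n + 1)) u \<le> smult (- of_nat n) u" by (rule smu_mono) simp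
  moreover have "smult (of_nat n) u \<le> smult (of_nat n + 1) u" by (rule smu_mono) simp
  ultimately show ?thesis using n
    by (intro exI[of _ "of_nat n + 1"]) (auto intro: order_trans simp del: minus_add_distrib)
qed

end

lemma frame_inf_Sup: "frame TYPE('l::complete_lattice) \<Longrightarrow> inf (x::'l) (Sup A) = Sup ((\<lambda>a. inf x a) ` A)"
  unfolding frame_def by blast

lemma frame_inf_sup: "frame TYPE('l::complete_lattice) \<Longrightarrow> inf (x::'l) (sup a b) = sup (inf x a) (inf x b)"
  using frame_inf_Sup[of x "{a,b}"] by simp

lemma frame_bool: "frame TYPE(bool)"
  unfolding frame_def by auto


locale intm = rsp smult u for smult :: "rat \<Rightarrow> 'r::{ordered_ab_group_add,lattice} \<Rightarrow> 'r" and u +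
  fixes P :: "'r \<Rightarrow> 'l::complete_lattice"
  assumes FR: "frame TYPE('l)" and IM: "INT_model smult u P"
begin

lemma P_u: "P u = top" using IM unfolding INT_model_def by blast
lemma P_disj: "inf (P f) (P (- f)) = bot" using IM unfolding INT_model_def by blast
lemma P_sub: "P (f + g) \<le> sup (P f) (P g)" using IM unfolding INT_model_def by blast
lemma P_nonpos: "f \<le> 0 \<Longrightarrow> P f = bot" using IM unfolding INT_model_def by blast
lemma P_round: "P f = Sup {P (f - smult s u) | s. s > 0}" using IM unfolding INT_model_def by blast

lemma P_mono: assumes "a \<le> b" shows "P a \<le> P b"
proof -
  have "P a = P (b + (a - b))" by simp
  also have "\<dots> \<le> sup (P b) (P (a - b))" by (rule P_sub)
  also have "P (a - b) = bot" using assms by (intro P_nonpos) simp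
  finally show ?thesis by simp
qed

lemma P_meet: "inf (P a) (P b) \<le> P (a + b)"
proof -
  have "P b = P ((a + b) + (- a))" by (simp add: algebra_simps)
  also have "\<dots> \<le> sup (P (a + b)) (P (- a))" by (rule P_sub)
  finally have "inf (P a) (P b) \<le> inf (P a) (sup (P (a + b)) (P (- a)))" by (intro inf_mono order_refl)
  also have "\<dots> = sup (inf (P a) (P (a + b))) (inf (P a) (P (- a)))" by (rule frame_inf_sup[OF FR])
  also have "\<dots> \<le> P (a + b)" by (simp add: P_disj le_infI2)
  finally show ?thesis .
qed

lemma P_smu_pos: assumes c: "c > 0" shows "P (smult c u) = top"
proof -
  have ind: "P (smult (of_nat (Suc n) * c) u) \<le> P (smult c u)" for n
  proof (induction n)
    case 0 then show ?case by simp
  next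
    case (Suc n)
    have "smult (of_nat (Suc (Suc n)) * c) u = smult (of_nat (Suc n) * c) u + smult c u"
      by (simp add: sm_addL[symmetric] algebra_simps)
    then have h: "P (smult (of_nat (Suc (Suc n)) * c) u) \<le> sup (P (smult (of_nat (Suc n) * c) u)) (P (smult c u))"
      using P_sub by simp
    show ?case using h Suc.IH by (metis sup_absorb2)
  qed
  obtain n :: nat where n: "1 < of_nat n * c" using ex_less_of_nat_mult[OF c] by blast
  then have "n \<noteq> 0" by (cases n) auto
  then obtain m where m: "n = Suc m" by (cases n) auto
  have "top = P u" by (simp add: P_u)
  also have "\<dots> = P (smult 1 u)" by (simp add: sm_one)
  also have "\<dots> \<le> P (smult (of_nat n * c) u)" using n by (intro P_mono smu_mono) simp
  also have "\<dots> \<le> P (smult c u)" using ind[of m] m by simp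
  finally show ?thesis by (simp add: top_le)
qed

lemma P_smu_nonpos: "c \<le> 0 \<Longrightarrow> P (smult c u) = bot"
  by (intro P_nonpos smu_nonpos)

lemma P_smu: "P (smult c u) = (if 0 < c then top else bot)"
  using P_smu_pos P_smu_nonpos by simp

lemma P_located: assumes "x < y" shows "sup (P (f - smult x u)) (P (smult y u - f)) = top"
proof -
  have "top = P (smult (y - x) u)" using assms by (simp add: P_smu)
  also have "smult (y - x) u = (f - smult x u) + (smult y u - f)" by (simp add: sm_diffL algebra_simps)
  also have "P \<dots> \<le> sup (P (f - smult x u)) (P (smult y u - f))" by (rule P_sub)
  finally show ?thesis by (simp add: top_le)
qed

lemma P_locate: assumes s: "s > 0"
  shows "Sup {inf (P (f - smult a u)) (P (smult (a + s) u - f)) | a. True} = top"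
proof -
  define W where "W = Sup {inf (P (f - smult a u)) (P (smult (a + s) u - f)) | a. True}"
  obtain N where N: "N > 0" "smult (- N) u \<le> f" "f \<le> smult N u" using bounded by blast
  define d where "d = s / 2"
  have d: "0 < d" "d < s" using s by (auto simp: d_def)
  have chain: "P (f - smult (N - of_nat k * d) u) \<le> W" for k :: nat
  proof (induction k)
    case 0
    have "P (f - smult N u) = bot" using N by (intro P_nonpos) simp
    then show ?case by simp
  next
    case (Suc k)
    define b where "b = N - of_nat k * d"
    define b' where "b' = N - of_nat (Suc k) * d"
    have bb: "b = b' + d" by (simp add: b_def b'_def algebra_simps)
    have "P (f - smult b' u) = inf (P (f - smult b' u)) (sup (P (f - smult b u)) (P (smult (b' + s) u - f)))"
      using P_located[of b "b' + s" f] bb d by simp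
    also have "\<dots> = sup (inf (P (f - smult b' u)) (P (f - smult b u))) (inf (P (f - smult b' u)) (P (smult (b' + s) u - f)))"
      by (rule frame_inf_sup[OF FR])
    also have "\<dots> \<le> W"
    proof (rule sup_least)
      show "inf (P (f - smult b' u)) (P (f - smult b u)) \<le> W" using Suc b_def by (simp add: le_infI2)
      show "inf (P (f - smult b' u)) (P (smult (b' + s) u - f)) \<le> W"
        unfolding W_def by (rule Sup_upper) blast
    qed
    finally show ?case by (simp add: b'_def)
  qed
  obtain k :: nat where k: "2 * N < of_nat k * d" using ex_less_of_nat_mult[OF d(1)] by blast
  define b where "b = N - of_nat k * d"
  have "- N - b > 0" using k by (simp add: b_def)
  then have "top = P (smult (- N - b) u)" by (simp add: P_smu)
  also have "\<dots> \<le> P (f - smult b u)"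
    using N(2) by (intro P_mono) (simp add: sm_diffL algebra_simps diff_right_mono)
  also have "\<dots> \<le> W" using chain[of k] by (simp add: b_def)
  finally show ?thesis by (simp add: W_def top_le)
qed

end


context intm begin

lemma P_add: "P (f + g - smult p u) = Sup {inf (P (f - smult p1 u)) (P (g - smult p2 u)) | p1 p2. p1 + p2 = p}"
  (is "_ = Sup ?S")
proof (rule antisym)
  show "Sup ?S \<le> P (f + g - smult p u)"
  proof (rule Sup_least)
    fix x assume "x \<in> ?S"
    then obtain p1 p2 where x: "x = inf (P (f - smult p1 u)) (P (g - smult p2 u))" and pp: "p1 + p2 = p" by blast
    have eq: "(f - smult p1 u) + (g - smult p2 u) = f + g - smult p u"
      using pp sm_addL[of p1 p2 u] by (auto simp: algebra_simps)
    show "x \<le> P (f + g - smult p u)" using P_meet[of "f - smult p1 u" "g - smult p2 u"] x eq by simp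
  qed
next
  define h where "h = f + g - smult p u"
  have "P h = Sup {P (h - smult s u) | s. s > 0}" by (rule P_round)
  also have "\<dots> \<le> Sup ?S"
  proof (rule Sup_least)
    fix y assume "y \<in> {P (h - smult s u) | s. s > 0}"
    then obtain s where y: "y = P (h - smult s u)" and s: "s > 0" by blast
    have "y = inf y (Sup {inf (P (f - smult a u)) (P (smult (a + s) u - f)) | a. True})"
      using P_locate[OF s, of f] by simp
    also have "\<dots> = Sup ((\<lambda>z. inf y z) ` {inf (P (f - smult a u)) (P (smult (a + s) u - f)) | a. True})"
      by (rule frame_inf_Sup[OF FR])
    also have "\<dots> \<le> Sup ?S"
    proof (rule Sup_least)
      fix z assume "z \<in> (\<lambda>z. inf y z) ` {inf (P (f - smult a u)) (P (smult (a + s) u - f)) | a. True}"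
      then obtain a where z: "z = inf y (inf (P (f - smult a u)) (P (smult (a + s) u - f)))" by blast
      define X where "X = P (g - smult (p - a) u)"
      define Y where "Y = P (f - smult (a + s) u)"
      define Z where "Z = P (smult (a + s) u - f)"
      have YZ: "inf Z Y = bot" using P_disj[of "f - smult (a + s) u"] by (simp add: Y_def Z_def inf_commute)
      have "h - smult s u = (g - smult (p - a) u) + (f - smult (a + s) u)"
        by (simp add: h_def sm_addL sm_diffL algebra_simps)
      then have yle: "y \<le> sup X Y" using P_sub y X_def Y_def by simp
      have "z \<le> inf (sup X Y) (inf (P (f - smult a u)) Z)" unfolding z Z_def
        by (intro inf_mono yle order_refl)
      also have "\<dots> \<le> inf (inf Z (sup X Y)) (P (f - smult a u))" by (rule eq_refl) (simp add: inf_aci)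
      also have "inf Z (sup X Y) = sup (inf Z X) (inf Z Y)" by (rule frame_inf_sup[OF FR])
      also have "\<dots> = inf Z X" using YZ by simp
      also have "inf (inf Z X) (P (f - smult a u)) \<le> inf (P (f - smult a u)) X"
        by (simp add: le_infI1 le_infI2)
      also have "\<dots> \<le> Sup ?S" unfolding X_def
        by (rule Sup_upper) (rule CollectI, rule exI[of _ a], rule exI[of _ "p - a"], simp)
      finally show "z \<le> Sup ?S" .
    qed
    finally show "y \<le> Sup ?S" .
  qed
  finally show "P (f + g - smult p u) \<le> Sup ?S" by (simp add: h_def)
qed

lemma P_addU: "P (smult q u - (f + g)) = Sup {inf (P (smult q1 u - f)) (P (smult q2 u - g)) | q1 q2. q1 + q2 = q}"
proof -
  have "P (smult q u - (f + g)) = P ((- f) + (- g) - smult (- q) u)" by (simp add: sm_negL algebra_simps)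
  also have "\<dots> = Sup {inf (P (- f - smult p1 u)) (P (- g - smult p2 u)) | p1 p2. p1 + p2 = - q}"
    by (rule P_add)
  also have "{inf (P (- f - smult p1 u)) (P (- g - smult p2 u)) | p1 p2. p1 + p2 = - q}
     = {inf (P (smult q1 u - f)) (P (smult q2 u - g)) | q1 q2. q1 + q2 = q}"
  proof (intro set_eqI iffI)
    fix x assume "x \<in> {inf (P (- f - smult p1 u)) (P (- g - smult p2 u)) | p1 p2. p1 + p2 = - q}"
    then obtain p1 p2 where "x = inf (P (- f - smult p1 u)) (P (- g - smult p2 u))" "p1 + p2 = - q" by blast
    moreover have e: "- f - smult p1 u = smult (- p1) u - f" "- g - smult p2 u = smult (- p2) u - g"
      by (simp_all add: sm_negL algebra_simps)
    ultimately show "x \<in> {inf (P (smult q1 u - f)) (P (smult q2 u - g)) | q1 q2. q1 + q2 = q}"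
      by (intro CollectI) (rule exI[of _ "- p1"], rule exI[of _ "- p2"], simp only: e, simp)
  next
    fix x assume "x \<in> {inf (P (smult q1 u - f)) (P (smult q2 u - g)) | q1 q2. q1 + q2 = q}"
    then obtain q1 q2 where "x = inf (P (smult q1 u - f)) (P (smult q2 u - g))" "q1 + q2 = q" by blast
    moreover have e: "- f - smult (- q1) u = smult q1 u - f" "- g - smult (- q2) u = smult q2 u - g"
      by (simp_all add: sm_negL algebra_simps)
    ultimately show "x \<in> {inf (P (- f - smult p1 u)) (P (- g - smult p2 u)) | p1 p2. p1 + p2 = - q}"
      by (intro CollectI) (rule exI[of _ "- q1"], rule exI[of _ "- q2"], simp only: e, simp)
  qed
  finally show ?thesis .
qed

lemma P_FUN: "FUN_model smult u (\<lambda>p f. P (f - smult p u)) (\<lambda>f q. P (smult q u - f))"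
proof -
  have ded: "dedekind_real (\<lambda>p. P (f - smult p u)) (\<lambda>q. P (smult q u - f))" for f
    unfolding dedekind_real_def
  proof (intro conjI allI impI)
    fix p p' :: rat assume "p' < p"
    then show "P (f - smult p u) \<le> P (f - smult p' u)"
      by (intro P_mono diff_left_mono smu_mono) simp
  next
    fix q q' :: rat assume "q < q'"
    then show "P (smult q u - f) \<le> P (smult q' u - f)"
      by (intro P_mono diff_right_mono smu_mono) simp
  next
    fix p
    have "P (f - smult p u) = Sup {P (f - smult p u - smult s u) | s. s > 0}" by (rule P_round)
    also have "{P (f - smult p u - smult s u) | s. s > 0} = {P (f - smult p' u) | p'. p' > p}"
    proof (intro set_eqI iffI)
      fix x assume "x \<in> {P (f - smult p u - smult s u) | s. s > 0}"
      then obtain s where "x = P (f - smult p u - smult s u)" "s > 0" by blast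
      then show "x \<in> {P (f - smult p' u) | p'. p' > p}"
        by (intro CollectI exI[of _ "p + s"]) (auto simp: sm_addL algebra_simps)
    next
      fix x assume "x \<in> {P (f - smult p' u) | p'. p' > p}"
      then obtain p' where "x = P (f - smult p' u)" "p' > p" by blast
      then show "x \<in> {P (f - smult p u - smult s u) | s. s > 0}"
        by (intro CollectI exI[of _ "p' - p"]) (auto simp: sm_diffL algebra_simps)
    qed
    finally show "P (f - smult p u) = Sup {P (f - smult p' u) | p'. p' > p}" .
  next
    fix q
    have "P (smult q u - f) = Sup {P (smult q u - f - smult s u) | s. s > 0}" by (rule P_round)
    also have "{P (smult q u - f - smult s u) | s. s > 0} = {P (smult q' u - f) | q'. q' < q}"
    proof (intro set_eqI iffI)
      fix x assume "x \<in> {P (smult q u - f - smult s u) | s. s > 0}"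
      then obtain s where "x = P (smult q u - f - smult s u)" "s > 0" by blast
      then show "x \<in> {P (smult q' u - f) | q'. q' < q}"
        by (intro CollectI exI[of _ "q - s"]) (auto simp: sm_diffL algebra_simps)
    next
      fix x assume "x \<in> {P (smult q' u - f) | q'. q' < q}"
      then obtain q' where "x = P (smult q' u - f)" "q' < q" by blast
      then show "x \<in> {P (smult q u - f - smult s u) | s. s > 0}"
        by (intro CollectI exI[of _ "q - q'"]) (auto simp: sm_diffL algebra_simps)
    qed
    finally show "P (smult q u - f) = Sup {P (smult q' u - f) | q'. q' < q}" .
  next
    fix p q :: rat assume "p < q"
    then show "sup (P (f - smult p u)) (P (smult q u - f)) = top" by (rule P_located)
  next
    fix p q :: rat assume pq: "p < q"
    have "inf (P (f - smult q u)) (P (smult p u - f)) \<le> P ((f - smult q u) + (smult p u - f))"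
      by (rule P_meet)
    also have "(f - smult q u) + (smult p u - f) = smult (p - q) u" by (simp add: sm_diffL algebra_simps)
    also have "P \<dots> = bot" using pq by (simp add: P_smu)
    finally show "inf (P (f - smult q u)) (P (smult p u - f)) = bot" by (simp add: bot_unique)
  qed
  show ?thesis
    unfolding FUN_model_def
  proof (intro conjI allI impI)
    show "dedekind_real (\<lambda>p. P (f - smult p u)) (\<lambda>q. P (smult q u - f))" for f by (rule ded)
    show "real_eq_const (\<lambda>p. P (0 - smult p u)) (\<lambda>q. P (smult q u - 0)) 0"
      unfolding real_eq_const_def by (simp add: sm_negL[symmetric] P_smu)
    show "real_add_rel (\<lambda>p. P (f + g - smult p u)) (\<lambda>q. P (smult q u - (f + g)))
            (\<lambda>p. P (f - smult p u)) (\<lambda>q. P (smult q u - f)) (\<lambda>p. P (g - smult p u)) (\<lambda>q. P (smult q u - g))" for f g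
      unfolding real_add_rel_def using P_add P_addU by blast
    show "P (smult q u - f) = bot" if "0 \<le> f" "q \<le> 0" for f q
      using that smu_nonpos[of q] by (intro P_nonpos) (simp add: order_trans)
    show "real_eq_const (\<lambda>p. P (u - smult p u)) (\<lambda>q. P (smult q u - u)) 1"
      unfolding real_eq_const_def
    proof -
      have "u - smult p u = smult (1 - p) u" for p using sm_diffL[of 1 p u] by (simp add: sm_one)
      moreover have "smult q u - u = smult (q - 1) u" for q using sm_diffL[of q 1 u] by (simp add: sm_one)
      ultimately show "(\<forall>p. P (u - smult p u) = (if p < 1 then top else bot)) \<and>
        (\<forall>q. P (smult q u - u) = (if 1 < q then top else bot))" by (simp add: P_smu)
    qed
  qed
qed

end


section \<open>Generic Dedekind lemmas\<close>

lemma dr_mono: assumes "dedekind_real L U" "p' \<le> p" shows "L p \<le> L p'"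
proof (cases "p' = p")
  case False then have "p' < p" using assms(2) by simp
  then show ?thesis using assms(1) unfolding dedekind_real_def by blast
qed simp
lemma dr_monoU: assumes "dedekind_real L U" "q \<le> q'" shows "U q \<le> U q'"
proof (cases "q' = q")
  case False then have "q < q'" using assms(2) by simp
  then show ?thesis using assms(1) unfolding dedekind_real_def by blast
qed simp
lemma dr_roundL: "dedekind_real L U \<Longrightarrow> L p = Sup {L p' | p'. p' > p}"
  unfolding dedekind_real_def by blast
lemma dr_roundU: "dedekind_real L U \<Longrightarrow> U q = Sup {U q' | q'. q' < q}"
  unfolding dedekind_real_def by blast
lemma dr_loc: "dedekind_real L U \<Longrightarrow> p < q \<Longrightarrow> sup (L p) (U q) = top"
  unfolding dedekind_real_def by blast
lemma dr_disj: "dedekind_real L U \<Longrightarrow> p < q \<Longrightarrow> inf (L q) (U p) = bot"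
  unfolding dedekind_real_def by blast

lemma add_lowerL: assumes "real_add_rel Lz Uz Lx Ux Ly Uy" shows "inf (Lx p1) (Ly p2) \<le> Lz (p1 + p2)"
proof -
  have "Lz (p1 + p2) = Sup {inf (Lx a) (Ly b) | a b. a + b = p1 + p2}" using assms unfolding real_add_rel_def by blast
  also have "inf (Lx p1) (Ly p2) \<le> \<dots>" by (rule Sup_upper) blast
  finally show ?thesis .
qed
lemma add_lowerU: assumes "real_add_rel Lz Uz Lx Ux Ly Uy" shows "inf (Ux q1) (Uy q2) \<le> Uz (q1 + q2)"
proof -
  have "Uz (q1 + q2) = Sup {inf (Ux a) (Uy b) | a b. a + b = q1 + q2}" using assms unfolding real_add_rel_def by blast
  also have "inf (Ux q1) (Uy q2) \<le> \<dots>" by (rule Sup_upper) blast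
  finally show ?thesis .
qed

lemma add_sym: assumes "real_add_rel Lz Uz Lx Ux Ly Uy" shows "real_add_rel Lz Uz Ly Uy Lx Ux"
proof -
  have e: "{inf (A p1) (B p2) | p1 p2. p1 + p2 = p} = {inf (B p1) (A p2) | p1 p2. p1 + p2 = p}"
    for A B :: "rat \<Rightarrow> 'a::complete_lattice" and p
  proof (intro set_eqI iffI)
    fix x assume "x \<in> {inf (A p1) (B p2) | p1 p2. p1 + p2 = p}"
    then obtain p1 p2 where "x = inf (A p1) (B p2)" "p1 + p2 = p" by blast
    then show "x \<in> {inf (B p1) (A p2) | p1 p2. p1 + p2 = p}"
      by (intro CollectI) (rule exI[of _ p2], rule exI[of _ p1], simp add: inf_commute add.commute)
  next
    fix x assume "x \<in> {inf (B p1) (A p2) | p1 p2. p1 + p2 = p}"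
    then obtain p1 p2 where "x = inf (B p1) (A p2)" "p1 + p2 = p" by blast
    then show "x \<in> {inf (A p1) (B p2) | p1 p2. p1 + p2 = p}"
      by (intro CollectI) (rule exI[of _ p2], rule exI[of _ p1], simp add: inf_commute add.commute)
  qed
  show ?thesis using assms unfolding real_add_rel_def by (simp add: e[of Lx Ly] e[of Ux Uy])
qed

lemma add_neg:
  assumes FR: "frame TYPE('l::complete_lattice)"
    and dx: "dedekind_real Lx Ux" and dy: "dedekind_real Ly (Uy :: rat \<Rightarrow> 'l)"
    and ad: "real_add_rel Lz Uz Lx Ux Ly Uy" and cz: "real_eq_const Lz Uz c"
  shows "Ly p = Ux (c - p)"
proof (rule antisym)
  have Lc: "Lz c = bot" "Uz c = bot" using cz unfolding real_eq_const_def by auto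
  have "Ly p = Sup {Ly p' | p'. p' > p}" by (rule dr_roundL[OF dy])
  also have "\<dots> \<le> Ux (c - p)"
  proof (rule Sup_least)
    fix y assume "y \<in> {Ly p' | p'. p' > p}"
    then obtain p' where y: "y = Ly p'" and pp: "p' > p" by blast
    have "y = inf (Ly p') (sup (Lx (c - p')) (Ux (c - p)))" using dr_loc[OF dx, of "c - p'" "c - p"] pp y by simp
    also have "\<dots> = sup (inf (Ly p') (Lx (c - p'))) (inf (Ly p') (Ux (c - p)))" by (rule frame_inf_sup[OF FR])
    also have "inf (Ly p') (Lx (c - p')) \<le> Lz (c - p' + p')"
      using add_lowerL[OF ad, of "c - p'" p'] by (simp add: inf_commute)
    then have "inf (Ly p') (Lx (c - p')) = bot" using Lc by (simp add: bot_unique)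
    finally show "y \<le> Ux (c - p)" by simp
  qed
  finally show "Ly p \<le> Ux (c - p)" .
next
  have Lc: "Lz c = bot" "Uz c = bot" using cz unfolding real_eq_const_def by auto
  have "Ux (c - p) = Sup {Ux q | q. q < c - p}" by (rule dr_roundU[OF dx])
  also have "\<dots> \<le> Ly p"
  proof (rule Sup_least)
    fix y assume "y \<in> {Ux q | q. q < c - p}"
    then obtain q where y: "y = Ux q" and qq: "q < c - p" by blast
    have "y = inf (Ux q) (sup (Ly p) (Uy (c - q)))" using dr_loc[OF dy, of p "c - q"] qq y by simp
    also have "\<dots> = sup (inf (Ux q) (Ly p)) (inf (Ux q) (Uy (c - q)))" by (rule frame_inf_sup[OF FR])
    also have "inf (Ux q) (Uy (c - q)) \<le> Uz (q + (c - q))" by (rule add_lowerU[OF ad])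
    then have "inf (Ux q) (Uy (c - q)) = bot" using Lc by (simp add: bot_unique)
    finally show "y \<le> Ly p" by simp
  qed
  finally show "Ux (c - p) \<le> Ly p" .
qed

lemma add_const:
  assumes ad: "real_add_rel Lz Uz Lx Ux Ly Uy" and cx: "real_eq_const Lx Ux a" and cy: "real_eq_const Ly Uy b"
  shows "real_eq_const Lz Uz (a + b)"
proof -
  have LxE: "Lx p = (if p < a then top else bot)" "Ux p = (if a < p then top else bot)" for p
    using cx unfolding real_eq_const_def by auto
  have LyE: "Ly p = (if p < b then top else bot)" "Uy p = (if b < p then top else bot)" for p
    using cy unfolding real_eq_const_def by auto
  have L: "Lz p = (if p < a + b then top else bot)" for p
  proof (cases "p < a + b")
    case True
    define e where "e = (a + b - p) / 2"
    have "top = inf (Lx (a - e)) (Ly (b - e))" using True by (simp add: LxE LyE e_def)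
    also have "\<dots> \<le> Lz (a - e + (b - e))" by (rule add_lowerL[OF ad])
    also have "a - e + (b - e) = p" by (simp add: e_def field_simps)
    finally show ?thesis using True by (simp add: top_le)
  next
    case False
    have "Lz p = Sup {inf (Lx p1) (Ly p2) | p1 p2. p1 + p2 = p}" using ad unfolding real_add_rel_def by blast
    also have "\<dots> \<le> bot"
      by (rule Sup_least) (use False in \<open>auto simp: LxE LyE\<close>)
    finally show ?thesis using False by (simp add: bot_unique)
  qed
  have U: "Uz q = (if a + b < q then top else bot)" for q
  proof (cases "a + b < q")
    case True
    define e where "e = (q - a - b) / 2"
    have "top = inf (Ux (a + e)) (Uy (b + e))" using True by (simp add: LxE LyE e_def)
    also have "\<dots> \<le> Uz (a + e + (b + e))" by (rule add_lowerU[OF ad])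
    also have "a + e + (b + e) = q" by (simp add: e_def field_simps)
    finally show ?thesis using True by (simp add: top_le)
  next
    case False
    have "Uz q = Sup {inf (Ux q1) (Uy q2) | q1 q2. q1 + q2 = q}" using ad unfolding real_add_rel_def by blast
    also have "\<dots> \<le> bot"
      by (rule Sup_least) (use False in \<open>auto simp: LxE LyE\<close>)
    finally show ?thesis using False by (simp add: bot_unique)
  qed
  show ?thesis unfolding real_eq_const_def using L U by blast
qed

lemma const_from_bounds:
  assumes d: "dedekind_real L U" and bl: "\<And>p. \<not> p < c \<Longrightarrow> L p = bot" and bu: "\<And>q. \<not> c < q \<Longrightarrow> U q = bot"
  shows "real_eq_const L U c"
proof -
  have "L p = top" if "p < c" for p
  proof -
    have "top = sup (L p) (U ((p + c) / 2))" using dr_loc[OF d, of p "(p + c)/2"] that by simp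
    also have "U ((p + c) / 2) = bot" using that by (intro bu) simp
    finally show ?thesis by simp
  qed
  moreover have "U q = top" if "c < q" for q
  proof -
    have "top = sup (L ((q + c) / 2)) (U q)" using dr_loc[OF d, of "(q + c)/2" q] that by simp
    also have "L ((q + c) / 2) = bot" using that by (intro bl) simp
    finally show ?thesis by simp
  qed
  ultimately show ?thesis unfolding real_eq_const_def using bl bu by auto
qed

lemma shift_const:
  assumes dx: "dedekind_real Lx Ux" and ad: "real_add_rel Lz Uz Lx Ux Ly Uy" and cy: "real_eq_const Ly Uy b"
  shows "Lz p = Lx (p - b)"
proof (rule antisym)
  have LyE: "Ly p = (if p < b then top else bot)" for p
    using cy unfolding real_eq_const_def by auto
  have "Lz p = Sup {inf (Lx p1) (Ly p2) | p1 p2. p1 + p2 = p}" using ad unfolding real_add_rel_def by blast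
  also have "\<dots> \<le> Lx (p - b)"
  proof (rule Sup_least)
    fix x assume "x \<in> {inf (Lx p1) (Ly p2) | p1 p2. p1 + p2 = p}"
    then obtain p1 p2 where x: "x = inf (Lx p1) (Ly p2)" and pp: "p1 + p2 = p" by blast
    show "x \<le> Lx (p - b)"
    proof (cases "p2 < b")
      case True
      then have "Lx p1 \<le> Lx (p - b)" using pp by (intro dr_mono[OF dx]) simp
      then show ?thesis using x by (simp add: le_infI1)
    next
      case False then show ?thesis using x by (simp add: LyE)
    qed
  qed
  finally show "Lz p \<le> Lx (p - b)" .
next
  have LyE: "Ly p = (if p < b then top else bot)" for p
    using cy unfolding real_eq_const_def by auto
  have "Lx (p - b) = Sup {Lx p' | p'. p' > p - b}" by (rule dr_roundL[OF dx])
  also have "\<dots> \<le> Lz p"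
  proof (rule Sup_least)
    fix y assume "y \<in> {Lx p' | p'. p' > p - b}"
    then obtain p' where y: "y = Lx p'" and pp: "p' > p - b" by blast
    have "y = inf (Lx p') (Ly (p - p'))" using y pp by (simp add: LyE)
    also have "\<dots> \<le> Lz (p' + (p - p'))" by (rule add_lowerL[OF ad])
    finally show "y \<le> Lz p" by simp
  qed
  finally show "Lx (p - b) \<le> Lz p" .
qed



locale funm = rsp smult u for smult :: "rat \<Rightarrow> 'r::{ordered_ab_group_add,lattice} \<Rightarrow> 'r" and u +
  fixes lt :: "rat \<Rightarrow> 'r \<Rightarrow> 'l::complete_lattice" and gt :: "'r \<Rightarrow> rat \<Rightarrow> 'l"
  assumes FR: "frame TYPE('l)" and FM: "FUN_model smult u lt gt"
begin

lemma F_ded: "dedekind_real (\<lambda>p. lt p f) (gt f)" using FM unfolding FUN_model_def by blast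
lemma F_zero: "real_eq_const (\<lambda>p. lt p 0) (gt 0) 0" using FM unfolding FUN_model_def by blast
lemma F_add: "real_add_rel (\<lambda>p. lt p (f + g)) (gt (f + g)) (\<lambda>p. lt p f) (gt f) (\<lambda>p. lt p g) (gt g)"
  using FM unfolding FUN_model_def by blast
lemma F_pos: "0 \<le> f \<Longrightarrow> q \<le> 0 \<Longrightarrow> gt f q = bot" using FM unfolding FUN_model_def by blast
lemma F_u: "real_eq_const (\<lambda>p. lt p u) (gt u) 1" using FM unfolding FUN_model_def by blast

lemma F_add0: "real_add_rel (\<lambda>p. lt p 0) (gt 0) (\<lambda>p. lt p f) (gt f) (\<lambda>p. lt p (- f)) (gt (- f))"
  using F_add[of f "- f"] by simp

lemma F_neg1: "lt p (- f) = gt f (- p)"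
  using add_neg[OF FR F_ded F_ded F_add0 F_zero, of p] by simp

lemma F_neg2: "gt (- f) q = lt (- q) f"
  using add_neg[OF FR F_ded F_ded add_sym[OF F_add0] F_zero, of "- q"] by simp

lemma F_negconst: "real_eq_const (\<lambda>p. lt p x) (gt x) c \<Longrightarrow> real_eq_const (\<lambda>p. lt p (- x)) (gt (- x)) (- c)"
  unfolding real_eq_const_def by (auto simp: F_neg1 F_neg2)

lemma F_nat: "real_eq_const (\<lambda>p. lt p (smult (of_nat n) u)) (gt (smult (of_nat n) u)) (of_nat n)"
proof (induction n)
  case 0 then show ?case using F_zero by simp
next
  case (Suc n)
  have e: "smult (of_nat (Suc n)) u = smult (of_nat n) u + u" by (simp add: sm_addL sm_one)
  show ?case unfolding e using add_const[OF F_add Suc F_u] by (simp add: add.commute)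
qed

lemma F_int: "real_eq_const (\<lambda>p. lt p (smult (of_int m) u)) (gt (smult (of_int m) u)) (of_int m)"
proof (cases "m \<ge> 0")
  case True
  then have "of_int m = (of_nat (nat m) :: rat)" by simp
  then show ?thesis using F_nat[of "nat m"] True by simp
next
  case False
  then have e: "(of_int m :: rat) = - of_nat (nat (- m))" by simp
  show ?thesis unfolding e sm_negL using F_negconst[OF F_nat[of "nat (- m)"]] by simp
qed

lemma F_scale: "lt p x \<le> lt (of_nat (Suc k) * p) (smult (of_nat (Suc k)) x) \<and>
                gt x q \<le> gt (smult (of_nat (Suc k)) x) (of_nat (Suc k) * q)"
proof (induction k)
  case 0 then show ?case by (simp add: sm_one)
next
  case (Suc k)
  have h: "(of_nat (Suc (Suc k)) :: rat) = of_nat (Suc k) + 1" by simp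
  have e: "smult (of_nat (Suc (Suc k))) x = smult (of_nat (Suc k)) x + x" by (simp only: h sm_addL sm_one)
  have e2: "of_nat (Suc (Suc k)) * r = of_nat (Suc k) * r + r" for r :: rat by (simp add: algebra_simps)
  have "lt p x \<le> inf (lt (of_nat (Suc k) * p) (smult (of_nat (Suc k)) x)) (lt p x)" using Suc by simp
  also have "\<dots> \<le> lt (of_nat (Suc k) * p + p) (smult (of_nat (Suc k)) x + x)" by (rule add_lowerL[OF F_add])
  moreover have "gt x q \<le> inf (gt (smult (of_nat (Suc k)) x) (of_nat (Suc k) * q)) (gt x q)" using Suc by simp
  moreover have "\<dots> \<le> gt (smult (of_nat (Suc k)) x + x) (of_nat (Suc k) * q + q)" by (rule add_lowerU[OF F_add])
  ultimately show ?case unfolding e e2 by (meson order_trans)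
qed

lemma F_rat: "real_eq_const (\<lambda>p. lt p (smult c u)) (gt (smult c u)) c"
proof -
  obtain m n where q: "quotient_of c = (m, n)" by (cases "quotient_of c") auto
  have n: "n > 0" using quotient_of_denom_pos[OF q] .
  have c: "c = of_int m / of_int n" using quotient_of_div[OF q] .
  define k where "k = nat n - 1"
  have kn: "(of_nat (Suc k) :: rat) = of_int n" using n by (simp add: k_def)
  have h: "of_nat (Suc k) * c = of_int m"
  proof -
    have "of_nat (Suc k) * c = of_int n * (of_int m / of_int n)" by (simp only: kn c)
    also have "\<dots> = of_int m" using n by simp
    finally show ?thesis .
  qed
  have sc: "smult (of_nat (Suc k)) (smult c u) = smult (of_int m) u"
    by (subst sm_assoc) (simp only: h)
  show ?thesis
  proof (rule const_from_bounds[OF F_ded])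
    fix p assume p: "\<not> p < c"
    have "lt p (smult c u) \<le> lt (of_nat (Suc k) * p) (smult (of_int m) u)" using F_scale[of p "smult c u" k] sc by simp
    also have "\<dots> = bot"
    proof -
      have np: "(0::rat) < of_int n" using n by simp
      have "\<not> p * of_int n < of_int m" using p pos_less_divide_eq[OF np, of p "of_int m"] c by simp
      then have "\<not> of_int n * p < of_int m" by (simp add: mult.commute)
      then show ?thesis using F_int[of m] unfolding real_eq_const_def kn by simp
    qed
    finally show "lt p (smult c u) = bot" by (simp add: bot_unique)
  next
    fix q assume p: "\<not> c < q"
    have "gt (smult c u) q \<le> gt (smult (of_int m) u) (of_nat (Suc k) * q)" using F_scale[of _ "smult c u" k q] sc by simp
    also have "\<dots> = bot"
    proof -
      have np: "(0::rat) < of_int n" using n by simp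
      have "\<not> of_int m < q * of_int n" using p pos_divide_less_eq[OF np, of "of_int m" q] c by simp
      then have "\<not> of_int m < of_int n * q" by (simp add: mult.commute)
      then show ?thesis using F_int[of m] unfolding real_eq_const_def kn by simp
    qed
    finally show "gt (smult c u) q = bot" by (simp add: bot_unique)
  qed
qed

lemma F_shift: "lt p f = lt 0 (f - smult p u)"
proof -
  have "lt 0 (f + smult (- p) u) = lt (0 - (- p)) f"
    by (rule shift_const[OF F_ded F_add F_rat])
  then show ?thesis by (simp add: sm_negL)
qed

lemma F_shiftU: "gt f q = lt 0 (smult q u - f)"
proof -
  have "lt 0 (smult q u + (- f)) = lt (0 - q) (- f)"
    by (rule shift_const[OF F_ded add_sym[OF F_add] F_rat])
  then show ?thesis by (simp add: F_neg1)
qed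

lemma F_INT: "INT_model smult u (\<lambda>f. lt 0 f)"
  unfolding INT_model_def
proof (intro conjI allI impI)
  show "lt 0 u = top" using F_u unfolding real_eq_const_def by simp
next
  fix f
  have "inf (lt 0 f) (lt 0 (- f)) = inf (gt f 0) (Sup {lt p' f | p'. p' > 0})"
    using dr_roundL[OF F_ded[of f], of 0] by (simp add: F_neg1 inf_commute)
  also have "\<dots> = Sup ((\<lambda>a. inf (gt f 0) a) ` {lt p' f | p'. p' > 0})" by (rule frame_inf_Sup[OF FR])
  also have "\<dots> = bot"
  proof -
    have "inf (gt f 0) a = bot" if "a \<in> {lt p' f | p'. p' > 0}" for a
      using that dr_disj[OF F_ded[of f], of 0] by (auto simp: inf_commute)
    then show ?thesis by (simp add: Sup_bot_conv)
  qed
  finally show "inf (lt 0 f) (lt 0 (- f)) = bot" .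
next
  fix f g
  have "lt 0 (f + g) = Sup {inf (lt p1 f) (lt p2 g) | p1 p2. p1 + p2 = 0}"
    using F_add[of f g] unfolding real_add_rel_def by blast
  also have "\<dots> \<le> sup (lt 0 f) (lt 0 g)"
  proof (rule Sup_least)
    fix x assume "x \<in> {inf (lt p1 f) (lt p2 g) | p1 p2. p1 + p2 = 0}"
    then obtain p1 p2 where x: "x = inf (lt p1 f) (lt p2 g)" and pp: "p1 + p2 = 0" by blast
    show "x \<le> sup (lt 0 f) (lt 0 g)"
    proof (cases "p1 \<ge> 0")
      case True
      then have "lt p1 f \<le> lt 0 f" by (intro dr_mono[OF F_ded])
      then show ?thesis using x by (simp add: le_infI1 le_supI1)
    next
      case False
      then have "lt p2 g \<le> lt 0 g" using pp by (intro dr_mono[OF F_ded]) simp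
      then show ?thesis using x by (simp add: le_infI2 le_supI2)
    qed
  qed
  finally show "lt 0 (f + g) \<le> sup (lt 0 f) (lt 0 g)" .
next
  fix f :: 'r assume "f \<le> 0"
  then have "gt (- f) (- 0) = bot" by (intro F_pos) simp_all
  then show "lt 0 f = bot" by (simp add: F_neg2[of f 0, simplified])
next
  fix f
  have "lt 0 f = Sup {lt p' f | p'. p' > 0}" by (rule dr_roundL[OF F_ded])
  also have "{lt p' f | p'. p' > 0} = {lt 0 (f - smult s u) | s. s > 0}"
  proof (intro set_eqI iffI)
    fix x assume "x \<in> {lt p' f | p'. p' > 0}"
    then obtain p' where "x = lt p' f" "p' > 0" by blast
    then show "x \<in> {lt 0 (f - smult s u) | s. s > 0}" using F_shift[of p' f] by blast
  next
    fix x assume "x \<in> {lt 0 (f - smult s u) | s. s > 0}"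
    then obtain s where "x = lt 0 (f - smult s u)" "s > 0" by blast
    then show "x \<in> {lt p' f | p'. p' > 0}" using F_shift[of s f] by (intro CollectI exI[of _ s]) simp
  qed
  finally show "lt 0 f = Sup {lt 0 (f - smult s u) | s. s > 0}" .
qed

end



lemma Sup_bool_iff: "(Sup S :: bool) \<longleftrightarrow> (\<exists>x\<in>S. x)"
  by (metis (full_types) Sup_bool_def)

lemma real_eq_by_rat:
  fixes x y :: real
  assumes "\<And>p::rat. of_rat p < x \<longleftrightarrow> of_rat p < y"
  shows "x = y"
proof (rule ccontr)
  assume "x \<noteq> y"
  then consider "x < y" | "y < x" by linarith
  then show False
  proof cases
    case 1 then obtain q where "x < of_rat q" "of_rat q < y" using of_rat_dense by blast
    then show False using assms[of q] by simp
  next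
    case 2 then obtain q where "y < of_rat q" "of_rat q < x" using of_rat_dense by blast
    then show False using assms[of q] by simp
  qed
qed

lemma cut_char:
  assumes mono: "\<And>p p'. p' < p \<Longrightarrow> L p \<Longrightarrow> L p'" and round: "\<And>p. L p \<Longrightarrow> \<exists>p'>p. L p'"
    and ne: "L a" and bd: "\<not> L b"
  shows "L p \<longleftrightarrow> of_rat p < Sup (of_rat ` {p. L p} :: real set)"
proof -
  have lb: "x < b" if "L x" for x
  proof (rule ccontr)
    assume "\<not> x < b"
    then have "b < x \<or> b = x" by auto
    then show False using mono[of b x] that bd by auto
  qed
  have bdd: "bdd_above (of_rat ` {p. L p} :: real set)"
    by (rule bdd_aboveI[of _ "of_rat b"]) (auto dest: lb simp: of_rat_less_eq less_imp_le)
  have nemp: "(of_rat ` {p. L p} :: real set) \<noteq> {}" using ne by auto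
  show ?thesis
  proof
    assume "L p"
    then obtain p' where "p' > p" "L p'" using round by blast
    then have "(of_rat p :: real) < of_rat p'" "(of_rat p' :: real) \<le> Sup (of_rat ` {p. L p})"
      using bdd by (auto simp: of_rat_less intro!: cSup_upper)
    then show "of_rat p < Sup (of_rat ` {p. L p} :: real set)" by linarith
  next
    assume "of_rat p < Sup (of_rat ` {p. L p} :: real set)"
    then obtain p' where "L p'" "(of_rat p :: real) < of_rat p'" using less_cSup_iff[OF nemp bdd] by auto
    then show "L p" using mono[of p p'] by (auto simp: of_rat_less)
  qed
qed

context rsp begin

lemma addhom_smult:
  assumes add: "\<And>f g. I (f + g) = (I f + I g :: real)"
  shows "I (smult r f) = of_rat r * I f"
proof -
  have I0: "I 0 = 0" using add[of 0 0] by simp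
  have Ineg: "I (- x) = - I x" for x using add[of x "- x"] I0 by simp
  have Inat: "I (smult (of_nat n) x) = of_nat n * I x" for n x
  proof (induction n)
    case 0 then show ?case using I0 by simp
  next
    case (Suc n)
    have h: "(of_nat (Suc n) :: rat) = of_nat n + 1" by simp
    have "smult (of_nat (Suc n)) x = smult (of_nat n) x + x" by (simp only: h sm_addL sm_one)
    then show ?case using Suc add by (simp add: algebra_simps)
  qed
  have Iint: "I (smult (of_int m) x) = of_int m * I x" for m x
  proof (cases "m \<ge> 0")
    case True
    then have "(of_int m :: rat) = of_nat (nat m)" by simp
    then show ?thesis using Inat[of "nat m" x] True by simp
  next
    case False
    then have e: "(of_int m :: rat) = - of_nat (nat (- m))" by simp
    show ?thesis unfolding e sm_negL Ineg Inat using False by simp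
  qed
  obtain m n where q: "quotient_of r = (m, n)" by (cases "quotient_of r") auto
  have n: "n > 0" using quotient_of_denom_pos[OF q] .
  have r: "r = of_int m / of_int n" using quotient_of_div[OF q] .
  have h: "of_int n * r = of_int m" using n by (simp add: r)
  have "of_int n * I (smult r f) = I (smult (of_int n) (smult r f))" by (simp add: Iint)
  also have "\<dots> = I (smult (of_int m) f)" by (simp add: sm_assoc h)
  also have "\<dots> = of_int m * I f" by (simp add: Iint)
  finally have "of_int n * I (smult r f) = of_int m * I f" .
  moreover have "(of_rat r :: real) = of_int m / of_int n" by (simp add: r of_rat_divide)
  ultimately have R: "of_int n * of_rat r = (of_int m :: real)" using n by simp
  have "of_int n * I (smult r f) = of_int n * (of_rat r * I f)"
    using \<open>of_int n * I (smult r f) = of_int m * I f\<close> R by (simp add: mult.assoc[symmetric])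
  then show ?thesis using n by simp
qed

lemma integral_INT:
  assumes I: "integral_on smult u I"
  shows "INT_model smult u (\<lambda>f. 0 < I f)"
proof -
  have add: "I (f + g) = I f + I g" for f g using I unfolding integral_on_def by blast
  have sm: "I (smult r f) = of_rat r * I f" for r f using I unfolding integral_on_def by blast
  have pos: "0 \<le> f \<Longrightarrow> 0 \<le> I f" for f using I unfolding integral_on_def by blast
  have Iu: "I u = 1" using I unfolding integral_on_def by blast
  have I0: "I 0 = 0" using add[of 0 0] by simp
  have Ineg: "I (- x) = - I x" for x using add[of x "- x"] I0 by simp
  have Idiff: "I (x - y) = I x - I y" for x y using add[of "x - y" y] by simp
  have Ism: "I (smult s u) = of_rat s" for s using sm[of s u] Iu by simp
  show ?thesis unfolding INT_model_def
  proof (intro conjI allI impI)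
    show "(0 < I u) = top" using Iu by simp
    show "inf (0 < I f) (0 < I (- f)) = bot" for f using Ineg[of f] by simp
    show "(0 < I (f + g)) \<le> sup (0 < I f) (0 < I g)" for f g
    proof -
      have "0 < I (f + g) \<longrightarrow> 0 < I f \<or> 0 < I g" using add[of f g] by arith
      then show ?thesis by simp
    qed
    show "(0 < I f) = bot" if "f \<le> 0" for f using pos[of "- f"] that Ineg[of f] by simp
    show "(0 < I f) = Sup {0 < I (f - smult s u) | s. s > 0}" for f
    proof -
      have "(0 < I f) \<longleftrightarrow> (\<exists>s>0. 0 < I f - of_rat s)" (is "_ \<longleftrightarrow> ?E")
      proof
        assume "0 < I f"
        then obtain q where "(0::real) < of_rat q" "of_rat q < I f" using of_rat_dense[of 0 "I f"] by blast
        then have "0 < q" "0 < I f - of_rat q" by (simp_all add: zero_less_of_rat_iff)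
        then show "\<exists>s>0. 0 < I f - of_rat s" by blast
      next
        assume "\<exists>s>0. 0 < I f - of_rat s"
        then obtain s where "s > 0" "0 < I f - of_rat s" by blast
        then have "(0::real) < of_rat s" by (simp add: zero_less_of_rat_iff)
        then show "0 < I f" using \<open>0 < I f - of_rat s\<close> by linarith
      qed
      also have "\<dots> \<longleftrightarrow> (\<exists>s>0. 0 < I (f - smult s u))" by (simp add: Idiff Ism)
      also have "\<dots> \<longleftrightarrow> Sup {0 < I (f - smult s u) | s. s > 0}" unfolding Sup_bool_iff by blast
      finally show ?thesis by simp
    qed
  qed
qed

end




context rsp begin

lemma integral_shift:
  assumes I: "integral_on smult u I"
  shows "I (f - smult p u) = I f - of_rat p"
proof -
  have add: "I (f + g) = I f + I g" for f g using I unfolding integral_on_def by blast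
  have sm: "I (smult r f) = of_rat r * I f" for r f using I unfolding integral_on_def by blast
  have Iu: "I u = 1" using I unfolding integral_on_def by blast
  have Idiff: "I (x - y) = I x - I y" for x y using add[of "x - y" y] by simp
  show ?thesis using Idiff sm[of p u] Iu by simp
qed

lemma INT_integral:
  assumes P: "INT_model smult u (P :: 'r \<Rightarrow> bool)"
  shows "\<exists>I. integral_on smult u I \<and> (\<lambda>f. 0 < I f) = P"
proof -
  interpret ip: intm smult u P using R SU frame_bool P by (simp add: intm_def rsp_def intm_axioms_def)
  define I where "I f = Sup (of_rat ` {p. P (f - smult p u)} :: real set)" for f
  have Ichar: "P (f - smult p u) \<longleftrightarrow> of_rat p < I f" for f p
  proof -
    obtain N where N: "N > 0" "smult (- N) u \<le> f" "f \<le> smult N u" using bounded by blast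
    have mono: "P (f - smult p' u)" if "p' < p" "P (f - smult p u)" for p p'
    proof -
      have "P (f - smult p u) \<le> P (f - smult p' u)" using that(1) by (intro ip.P_mono diff_left_mono smu_mono) simp
      then show ?thesis using that(2) by (simp add: le_bool_def)
    qed
    have round: "\<exists>p'>p. P (f - smult p' u)" if "P (f - smult p u)" for p
    proof -
      have "Sup {P (f - smult p u - smult s u) | s. s > 0}" using that ip.P_round[of "f - smult p u"] by simp
      then obtain s where s: "s > 0" "P (f - smult p u - smult s u)" unfolding Sup_bool_iff by blast
      have e: "f - smult p u - smult s u = f - smult (p + s) u" by (simp add: sm_addL algebra_simps)
      from s(2) have "P (f - smult (p + s) u)" by (simp only: e)
      then show ?thesis using s(1) by (intro exI[of _ "p + s"]) simp
    qed
    have ne: "P (f - smult (- N - 1) u)"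
    proof -
      have "smult (- N - 1) u = smult (- N) u - smult 1 u" by (rule sm_diffL)
      then have "smult 1 u \<le> f - smult (- N - 1) u" using N(2) by (simp add: algebra_simps)
      then have "P (smult 1 u) \<le> P (f - smult (- N - 1) u)" by (rule ip.P_mono)
      then show ?thesis by (simp add: ip.P_smu le_bool_def)
    qed
    have bd: "\<not> P (f - smult N u)" using N(3) ip.P_nonpos[of "f - smult N u"] by simp
    show ?thesis unfolding I_def
      by (rule cut_char[of "\<lambda>p. P (f - smult p u)", OF mono round ne bd])
  qed
  have add: "I (f + g) = I f + I g" for f g
  proof (rule real_eq_by_rat)
    fix p :: rat
    have "of_rat p < I (f + g) \<longleftrightarrow> P (f + g - smult p u)" by (simp add: Ichar)
    also have "\<dots> \<longleftrightarrow> Sup {inf (P (f - smult p1 u)) (P (g - smult p2 u)) | p1 p2. p1 + p2 = p}"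
      by (simp only: ip.P_add)
    also have "\<dots> \<longleftrightarrow> (\<exists>p1 p2. p1 + p2 = p \<and> P (f - smult p1 u) \<and> P (g - smult p2 u))"
      unfolding Sup_bool_iff by auto
    also have "\<dots> \<longleftrightarrow> (\<exists>p1 p2. p1 + p2 = p \<and> of_rat p1 < I f \<and> of_rat p2 < I g)" by (simp add: Ichar)
    also have "\<dots> \<longleftrightarrow> of_rat p < I f + I g"
    proof
      assume "\<exists>p1 p2. p1 + p2 = p \<and> of_rat p1 < I f \<and> of_rat p2 < I g"
      then obtain p1 p2 where "p1 + p2 = p" "of_rat p1 < I f" "of_rat p2 < I g" by blast
      then have e: "(of_rat p :: real) = of_rat p1 + of_rat p2" "of_rat p1 < I f" "of_rat p2 < I g"
        by (auto simp: of_rat_add[symmetric])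
      then show "of_rat p < I f + I g" by linarith
    next
      assume "of_rat p < I f + I g"
      then have "of_rat p - I g < I f" by simp
      then obtain p1 where p1: "of_rat p - I g < of_rat p1" "of_rat p1 < I f" using of_rat_dense by blast
      have "of_rat (p - p1) < I g" using p1(1) by (simp add: of_rat_diff)
      then show "\<exists>p1 p2. p1 + p2 = p \<and> of_rat p1 < I f \<and> of_rat p2 < I g"
        using p1(2) by (intro exI[of _ p1] exI[of _ "p - p1"]) simp
    qed
    finally show "of_rat p < I (f + g) \<longleftrightarrow> of_rat p < I f + I g" .
  qed
  have sm: "I (smult r f) = of_rat r * I f" for r f by (rule addhom_smult[OF add])
  have pos: "0 \<le> I f" if f: "0 \<le> f" for f
  proof (rule ccontr)
    assume "\<not> 0 \<le> I f"
    then have "I f < 0" by simp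
    then obtain q where q: "I f < of_rat q" "of_rat q < (0::real)" using of_rat_dense by blast
    then have q0: "q < 0" by simp
    have "smult (- q) u \<le> f - smult q u" using f by (simp add: sm_negL algebra_simps)
    then have "P (smult (- q) u) \<le> P (f - smult q u)" by (rule ip.P_mono)
    then have "P (f - smult q u)" using q0 by (simp add: ip.P_smu le_bool_def)
    then show False using Ichar q(1) by fastforce
  qed
  have Iu: "I u = 1"
  proof (rule real_eq_by_rat)
    fix p :: rat
    have "u - smult p u = smult (1 - p) u" using sm_diffL[of 1 p u] by (simp add: sm_one)
    then have "of_rat p < I u \<longleftrightarrow> P (smult (1 - p) u)" using Ichar[of u p] by simp
    also have "\<dots> \<longleftrightarrow> p < 1" by (simp add: ip.P_smu)
    also have "\<dots> \<longleftrightarrow> of_rat p < (1::real)" by (metis of_rat_1 of_rat_less)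
    finally show "of_rat p < I u \<longleftrightarrow> of_rat p < (1::real)" .
  qed
  have "integral_on smult u I" unfolding integral_on_def using add sm pos Iu by blast
  moreover have "(\<lambda>f. 0 < I f) = P"
  proof
    fix f show "(0 < I f) = P f" using Ichar[of f 0] by simp
  qed
  ultimately show ?thesis by blast
qed

lemma part3: "bij_betw (\<lambda>I f. 0 < I f) {I. integral_on smult u I} {P :: 'r \<Rightarrow> bool. INT_model smult u P}"
  unfolding bij_betw_def
proof
  show "inj_on (\<lambda>I f. 0 < I f) {I. integral_on smult u I}"
  proof (rule inj_onI)
    fix I J :: "'r \<Rightarrow> real"
    assume I: "I \<in> {I. integral_on smult u I}" and J: "J \<in> {I. integral_on smult u I}"
      and eq: "(\<lambda>f. 0 < I f) = (\<lambda>f. 0 < J f)"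
    show "I = J"
    proof
      fix f
      show "I f = J f"
      proof (rule real_eq_by_rat)
        fix p
        have "of_rat p < I f \<longleftrightarrow> 0 < I (f - smult p u)" using integral_shift[of I f p] I by simp
        also have "\<dots> \<longleftrightarrow> 0 < J (f - smult p u)" using fun_cong[OF eq, of "f - smult p u"] by simp
        also have "\<dots> \<longleftrightarrow> of_rat p < J f" using integral_shift[of J f p] J by simp
        finally show "of_rat p < I f \<longleftrightarrow> of_rat p < J f" .
      qed
    qed
  qed
  show "(\<lambda>I f. 0 < I f) ` {I. integral_on smult u I} = {P. INT_model smult u P}"
  proof
    show "(\<lambda>I f. 0 < I f) ` {I. integral_on smult u I} \<subseteq> {P. INT_model smult u P}"
      using integral_INT by auto
    show "{P. INT_model smult u P} \<subseteq> (\<lambda>I f. 0 < I f) ` {I. integral_on smult u I}"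
    proof
      fix P assume "P \<in> {P :: 'r \<Rightarrow> bool. INT_model smult u P}"
      then obtain I where "integral_on smult u I" "(\<lambda>f. 0 < I f) = P" using INT_integral by blast
      then show "P \<in> (\<lambda>I f. 0 < I f) ` {I. integral_on smult u I}" by blast
    qed
  qed
qed

end


theorem lemma3p4:
  fixes smult :: "rat \<Rightarrow> 'r::{ordered_ab_group_add,lattice} \<Rightarrow> 'r"
    and u :: 'r
  assumes "riesz_space_Q smult"
    and "strong_unit smult u"
    and "frame TYPE('l::complete_lattice)"
  shows "(\<forall>(lt :: rat \<Rightarrow> 'r \<Rightarrow> 'l) gt. FUN_model smult u lt gt \<longrightarrow>
            INT_model smult u (\<lambda>f. lt 0 f) \<and>
            (\<forall>p f. lt p f = lt 0 (f - smult p u)) \<and>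
            (\<forall>f q. gt f q = lt 0 (smult q u - f)))
       \<and> (\<forall>P :: 'r \<Rightarrow> 'l. INT_model smult u P \<longrightarrow>
            FUN_model smult u (\<lambda>p f. P (f - smult p u)) (\<lambda>f q. P (smult q u - f)) \<and>
            (\<forall>f. P (f - smult 0 u) = P f))
       \<and> bij_betw (\<lambda>I f. 0 < I f) {I. integral_on smult u I} {P :: 'r \<Rightarrow> bool. INT_model smult u P}"
proof (intro conjI allI impI)
  interpret rs: rsp smult u using assms(1,2) by (simp add: rsp_def)
  fix lt :: "rat \<Rightarrow> 'r \<Rightarrow> 'l" and gt
  assume FM: "FUN_model smult u lt gt"
  interpret fm: funm smult u lt gt using assms FM by (simp add: funm_def rsp_def funm_axioms_def)
  show "INT_model smult u (\<lambda>f. lt 0 f)" by (rule fm.F_INT)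
  show "lt p f = lt 0 (f - smult p u)" for p f by (rule fm.F_shift)
  show "gt f q = lt 0 (smult q u - f)" for f q by (rule fm.F_shiftU)
next
  fix P :: "'r \<Rightarrow> 'l"
  assume IM: "INT_model smult u P"
  interpret im: intm smult u P using assms IM by (simp add: intm_def rsp_def intm_axioms_def)
  show "FUN_model smult u (\<lambda>p f. P (f - smult p u)) (\<lambda>f q. P (smult q u - f))" by (rule im.P_FUN)
  show "P (f - smult 0 u) = P f" for f by simp
next
  interpret rs: rsp smult u using assms(1,2) by (simp add: rsp_def)
  show "bij_betw (\<lambda>I f. 0 < I f) {I. integral_on smult u I} {P :: 'r \<Rightarrow> bool. INT_model smult u P}"
    by (rule rs.part3)
qed

end
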